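(* Under the hypotheses of the real single-interference setting in the context (with $N\ge2$, $\|h_0\|=\|h_1\|=1$, $h_0^{\sf T}h_1=\sin\tau$, $\tau\in(-\pi/2,\pi/2)$, $\sigma_0^2,\sigma_1^2,\sigma_n^2>0$, $c_1\in[-\sigma_0\sigma_1,\sigma_0\sigma_1]$), let $\delta:=\sigma_n^2\tan\tau-c_1\cos\tau$. Then \[ \mathrm{MSE}_{\rm MVDR}=\frac{\sigma_n^2(\sigma_1^2+\sigma_n^2)+|c_1|^2\cos^2\tau}{\sigma_1^2\cos^2\tau+\sigma_n^2},\quad \mathrm{MSE}_{\rm ZF}=\sigma_n^2(\tan^2\tau+1), \] \[ \mathrm{MSE}_{\rm MMSE\text{-}DR}=\frac{\sigma_n^2(\sigma_1^2+\sigma_n^2)}{\sigma_1^2\cos^2\tau+\sigma_n^2}=\mathrm{MSE}_{\rm MVDR}-\frac{|c_1|^2\cos^2\tau}{\sigma_1^2\cos^2\tau+\sigma_n^2}=\mathrm{MSE}_{\rm ZF}-\frac{\sigma_n^4\tan^2\tau}{\sigma_1^2\cos^2\tau+\sigma_n^2}. \] If $\delta=0$, then $\mathrm{MSE}(\lambda)=\mathrm{MSE}_{\rm ZF}=\mathrm{MSE}_{\rm MVDR}$ for all $\lambda\ge0$. If $\delta\ne0$, then with $\gamma:=\sigma_n^2\tan\tau/\delta$, \[ \mathrm{MSE}_{\rm RZF}=\begin{cases}\mathrm{MSE}_{\rm ZF}, & \gamma\le0,\\ \mathrm{MSE}_{\rm MMSE\text{-}DR}, & \gamma\in(0,1),\\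 \mathrm{MSE}_{\rm MVDR}, & \gamma\ge1.\end{cases} \]
   Context: Real-valued single-interference model: $y(k)=s_0(k)h_0+s_1(k)h_1+n(k)\in\mathbb{R}^N$, with real zero-mean jointly weakly stationary signals $s_0,s_1$, $\sigma_j^2:=E[s_j(k)^2]$, $c_1:=E[s_0(k)s_1(k)]$, and real zero-mean noise $n(k)\sim\mathcal{N}(0,\sigma_n^2I)$ uncorrelated with the signals. $R:=E[y(k)y(k)^{\sf T}]$. The MSE of $w$ is $J_{\rm MSE}(w):=E[(w^{\sf T}y(k)-s_0(k))^2]$. Beamformers: RZF $w_{\rm RZF}(\lambda):=R_\lambda^{-1}h_0/(h_0^{\sf T}R_\lambda^{-1}h_0)$ with $R_\lambda:=R+\lambda h_1h_1^{\sf T}$, $\lambda\ge0$; MVDR $w_{\rm MVDR}:=w_{\rm RZF}(0)$; ZF $w_{\rm ZF}:=R^{-1}H(H^{\sf T}R^{-1}H)^{-1}e_1$ with $H=[h_0\ h_1]$, $e_1=[1,0]^{\sf T}$; MMSE-DR $w_{\rm MMSE\text{-}DR}:=\widetilde R^{-1}h_0/(h_0^{\sf T}\widetilde R^{-1}h_0)$ with $\widetilde R:=\sigma_n^2I+\sigma_1^2h_1h_1^{\sf T}$. $\mathrm{MSE}(\lambda):=J_{\rm MSE}(w_{\rm RZF}(\lambda))$, $\mathrm{MSE}_{\rm RZF}:=\inf_{\lambda\ge0}\mathrm{MSE}(\lambda)$, and $\mathrm{MSE}_{X}:=J_{\rm MSE}(w_X)$ for $X\in\{\rm MVDR,ZF,MMSE\text{-}DR\}$.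 *)

theory Defs
  imports "HOL-Analysis.Analysis"
begin

text \<open>Real single-interference model y(k) = s0(k) h0 + s1(k) h1 + n(k) in R^N.
  All quantities below are the second-moment expressions determined by the model:
  s2_0 = sigma_0^2 = E[s0^2], s2_1 = sigma_1^2 = E[s1^2], c1 = E[s0 s1],
  sn2 = sigma_n^2 (noise covariance sn2 * I, noise uncorrelated with the signals).\<close>

definition outer :: "real ^ 'n \<Rightarrow> real ^ 'n \<Rightarrow> real ^ 'n ^ 'n" where
  "outer a b = (\<chi> i j. a $ i * b $ j)"

text \<open>R = E[y y^T]\<close>
definition Rcov :: "real ^ 'n \<Rightarrow> real ^ 'n \<Rightarrow> real \<Rightarrow> real \<Rightarrow> real \<Rightarrow> real \<Rightarrow> real ^ 'n ^ 'n" where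
  "Rcov h0 h1 s2_0 s2_1 c1 sn2 =
     s2_0 *\<^sub>R outer h0 h0 + s2_1 *\<^sub>R outer h1 h1 + c1 *\<^sub>R (outer h0 h1 + outer h1 h0)
     + sn2 *\<^sub>R mat 1"

text \<open>J_MSE(w) = E[(w^T y - s0)^2] = w^T R w - 2 w^T E[y s0] + E[s0^2],
  with E[y s0] = sigma_0^2 h0 + c1 h1.\<close>
definition Jmse :: "real ^ 'n \<Rightarrow> real ^ 'n \<Rightarrow> real \<Rightarrow> real \<Rightarrow> real \<Rightarrow> real \<Rightarrow> real ^ 'n \<Rightarrow> real" where
  "Jmse h0 h1 s2_0 s2_1 c1 sn2 w =
     w \<bullet> (Rcov h0 h1 s2_0 s2_1 c1 sn2 *v w) - 2 * (w \<bullet> (s2_0 *\<^sub>R h0 + c1 *\<^sub>R h1)) + s2_0"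

definition dless :: "real ^ 'n ^ 'n \<Rightarrow> real ^ 'n \<Rightarrow> real ^ 'n" where
  "dless M h0 = (1 / (h0 \<bullet> (matrix_inv M *v h0))) *\<^sub>R (matrix_inv M *v h0)"

definition w_RZF :: "real ^ 'n \<Rightarrow> real ^ 'n \<Rightarrow> real \<Rightarrow> real \<Rightarrow> real \<Rightarrow> real \<Rightarrow> real \<Rightarrow> real ^ 'n" where
  "w_RZF h0 h1 s2_0 s2_1 c1 sn2 lam =
     dless (Rcov h0 h1 s2_0 s2_1 c1 sn2 + lam *\<^sub>R outer h1 h1) h0"

definition w_MVDR :: "real ^ 'n \<Rightarrow> real ^ 'n \<Rightarrow> real \<Rightarrow> real \<Rightarrow> real \<Rightarrow> real \<Rightarrow> real ^ 'n" where
  "w_MVDR h0 h1 s2_0 s2_1 c1 sn2 = w_RZF h0 h1 s2_0 s2_1 c1 sn2 0"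

text \<open>H = [h0 h1] (N x 2), e1 = [1,0]^T; in the numeral type 2 the column indices are 1 and 2 (= 0).\<close>
definition Hmat :: "real ^ 'n \<Rightarrow> real ^ 'n \<Rightarrow> real ^ 2 ^ 'n" where
  "Hmat h0 h1 = (\<chi> i j. if j = 1 then h0 $ i else h1 $ i)"

definition e1 :: "real ^ 2" where
  "e1 = (\<chi> j. if j = 1 then 1 else 0)"

definition w_ZF :: "real ^ 'n \<Rightarrow> real ^ 'n \<Rightarrow> real \<Rightarrow> real \<Rightarrow> real \<Rightarrow> real \<Rightarrow> real ^ 'n" where
  "w_ZF h0 h1 s2_0 s2_1 c1 sn2 =
     (let Ri = matrix_inv (Rcov h0 h1 s2_0 s2_1 c1 sn2); H = Hmat h0 h1
      in Ri ** H ** matrix_inv (transpose H ** Ri ** H) *v e1)"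

definition w_MMSE_DR :: "real ^ 'n \<Rightarrow> real ^ 'n \<Rightarrow> real \<Rightarrow> real \<Rightarrow> real ^ 'n" where
  "w_MMSE_DR h0 h1 s2_1 sn2 = dless (sn2 *\<^sub>R mat 1 + s2_1 *\<^sub>R outer h1 h1) h0"

definition MSE :: "real ^ 'n \<Rightarrow> real ^ 'n \<Rightarrow> real \<Rightarrow> real \<Rightarrow> real \<Rightarrow> real \<Rightarrow> real \<Rightarrow> real" where
  "MSE h0 h1 s2_0 s2_1 c1 sn2 lam =
     Jmse h0 h1 s2_0 s2_1 c1 sn2 (w_RZF h0 h1 s2_0 s2_1 c1 sn2 lam)"

definition MSE_RZF :: "real ^ 'n \<Rightarrow> real ^ 'n \<Rightarrow> real \<Rightarrow> real \<Rightarrow> real \<Rightarrow> real \<Rightarrow> real" where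
  "MSE_RZF h0 h1 s2_0 s2_1 c1 sn2 = (INF lam\<in>{0..}. MSE h0 h1 s2_0 s2_1 c1 sn2 lam)"

definition MSE_MVDR :: "real ^ 'n \<Rightarrow> real ^ 'n \<Rightarrow> real \<Rightarrow> real \<Rightarrow> real \<Rightarrow> real \<Rightarrow> real" where
  "MSE_MVDR h0 h1 s2_0 s2_1 c1 sn2 =
     Jmse h0 h1 s2_0 s2_1 c1 sn2 (w_MVDR h0 h1 s2_0 s2_1 c1 sn2)"

definition MSE_ZF :: "real ^ 'n \<Rightarrow> real ^ 'n \<Rightarrow> real \<Rightarrow> real \<Rightarrow> real \<Rightarrow> real \<Rightarrow> real" where
  "MSE_ZF h0 h1 s2_0 s2_1 c1 sn2 =
     Jmse h0 h1 s2_0 s2_1 c1 sn2 (w_ZF h0 h1 s2_0 s2_1 c1 sn2)"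

definition MSE_MMSE_DR :: "real ^ 'n \<Rightarrow> real ^ 'n \<Rightarrow> real \<Rightarrow> real \<Rightarrow> real \<Rightarrow> real \<Rightarrow> real" where
  "MSE_MMSE_DR h0 h1 s2_0 s2_1 c1 sn2 =
     Jmse h0 h1 s2_0 s2_1 c1 sn2 (w_MMSE_DR h0 h1 s2_1 sn2)"

end

theory Submission
  imports Defs
begin


lemma matrix_inv_props:
  fixes M :: "real^'n^'n"
  assumes "invertible M"
  shows "M ** matrix_inv M = mat 1" "matrix_inv M ** M = mat 1"
proof -
  have "\<exists>A'. M ** A' = mat 1 \<and> A' ** M = mat 1" using assms unfolding invertible_def by blast
  from someI_ex[OF this] show "M ** matrix_inv M = mat 1" "matrix_inv M ** M = mat 1"
    unfolding matrix_inv_def by auto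
qed

lemma posdef_invertible:
  fixes M :: "real^'n^'n"
  assumes "\<And>x. x \<noteq> 0 \<Longrightarrow> 0 < x \<bullet> (M *v x)"
  shows "invertible M"
proof -
  have "inj ((*v) M)"
  proof (rule injI)
    fix x y assume "M *v x = M *v y"
    hence "M *v (x - y) = 0" by (simp add: matrix_vector_mult_diff_distrib)
    thus "x = y" using assms[of "x - y"] by force
  qed
  thus ?thesis using invertible_left_inverse matrix_left_invertible_injective by blast
qed

lemma inv_solve:
  fixes M :: "real^'n^'n"
  assumes "invertible M"
  shows "M *v (matrix_inv M *v b) = b"
  by (simp add: matrix_vector_mul_assoc matrix_inv_props[OF assms])

lemma outer_mult: "outer a b *v x = (b \<bullet> x) *\<^sub>R a"
  by (simp add: outer_def matrix_vector_mult_def inner_vec_def vec_eq_iff sum_distrib_left mult_ac)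

lemma Rcov_mult:
  "(Rcov h0 h1 s0 s1 c1 sn + lam *\<^sub>R outer h1 h1) *v x =
     sn *\<^sub>R x + (s0 * (h0 \<bullet> x) + c1 * (h1 \<bullet> x)) *\<^sub>R h0 + ((s1 + lam) * (h1 \<bullet> x) + c1 * (h0 \<bullet> x)) *\<^sub>R h1"
  by (simp add: Rcov_def matrix_vector_mult_add_rdistrib outer_mult flip: scaleR_matrix_vector_assoc)
     (simp add: algebra_simps)

lemma Rcov_mult0:
  "Rcov h0 h1 s0 s1 c1 sn *v x =
     sn *\<^sub>R x + (s0 * (h0 \<bullet> x) + c1 * (h1 \<bullet> x)) *\<^sub>R h0 + (s1 * (h1 \<bullet> x) + c1 * (h0 \<bullet> x)) *\<^sub>R h1"
  using Rcov_mult[of h0 h1 s0 s1 c1 sn 0 x] by simp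

lemma quad_form:
  "x \<bullet> ((Rcov h0 h1 s0 s1 c1 sn + lam *\<^sub>R outer h1 h1) *v x) =
     sn * (x \<bullet> x) + (s0 * (h0 \<bullet> x)^2 + (s1 + lam) * (h1 \<bullet> x)^2 + 2 * c1 * (h0 \<bullet> x) * (h1 \<bullet> x))"
  unfolding Rcov_mult by (simp add: inner_add_right inner_commute power2_eq_square algebra_simps)

lemma M_posdef:
  fixes h0 h1 :: "real^'n"
  assumes sn: "sn > 0" and psd: "\<And>a b. 0 \<le> s0 * a^2 + s1 * b^2 + 2 * c1 * a * b" and lam: "lam \<ge> 0"
  assumes "x \<noteq> 0"
  shows "0 < x \<bullet> ((Rcov h0 h1 s0 s1 c1 sn + lam *\<^sub>R outer h1 h1) *v x)"
proof -
  have "0 < sn * (x \<bullet> x)" using sn assms(4) by simp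
  moreover have "0 \<le> lam * (h1 \<bullet> x)^2" using lam by simp
  ultimately show ?thesis unfolding quad_form using psd[of "h0 \<bullet> x" "h1 \<bullet> x"]
    by (simp add: algebra_simps)
qed

lemma M_inv_span:
  fixes h0 h1 :: "real^'n"
  assumes sn: "sn > 0" and psd: "\<And>a b. 0 \<le> s0 * a^2 + s1 * b^2 + 2 * c1 * a * b" and lam: "lam \<ge> 0"
  shows "\<exists>p q. matrix_inv (Rcov h0 h1 s0 s1 c1 sn + lam *\<^sub>R outer h1 h1) *v (p0 *\<^sub>R h0 + q0 *\<^sub>R h1)
            = p *\<^sub>R h0 + q *\<^sub>R h1"
proof -
  let ?M = "Rcov h0 h1 s0 s1 c1 sn + lam *\<^sub>R outer h1 h1"
  have inv: "invertible ?M" by (rule posdef_invertible, rule M_posdef[OF sn psd lam])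
  define u where "u = matrix_inv ?M *v (p0 *\<^sub>R h0 + q0 *\<^sub>R h1)"
  have "?M *v u = p0 *\<^sub>R h0 + q0 *\<^sub>R h1" unfolding u_def by (rule inv_solve[OF inv])
  hence "sn *\<^sub>R u = (p0 - (s0 * (h0 \<bullet> u) + c1 * (h1 \<bullet> u))) *\<^sub>R h0 + (q0 - ((s1 + lam) * (h1 \<bullet> u) + c1 * (h0 \<bullet> u))) *\<^sub>R h1"
    unfolding Rcov_mult by (simp add: algebra_simps)
  moreover have "u = (1/sn) *\<^sub>R ((p0 - (s0 * (h0 \<bullet> u) + c1 * (h1 \<bullet> u))) *\<^sub>R h0 + (q0 - ((s1 + lam) * (h1 \<bullet> u) + c1 * (h0 \<bullet> u))) *\<^sub>R h1)"
  proof -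
    have "u = (1/sn) *\<^sub>R (sn *\<^sub>R u)" using sn by simp
    thus ?thesis using calculation by simp
  qed
  hence "u = ((p0 - (s0 * (h0 \<bullet> u) + c1 * (h1 \<bullet> u))) / sn) *\<^sub>R h0 + ((q0 - ((s1 + lam) * (h1 \<bullet> u) + c1 * (h0 \<bullet> u))) / sn) *\<^sub>R h1"
    by (simp add: scaleR_add_right)
  thus ?thesis unfolding u_def by blast
qed

lemma dless_props:
  fixes h0 h1 :: "real^'n"
  assumes n0: "norm h0 = 1" and n1: "norm h1 = 1" and hs: "h0 \<bullet> h1 = s"
  assumes sn: "sn > 0" and psd: "\<And>a b. 0 \<le> s0 * a^2 + s1 * b^2 + 2 * c1 * a * b" and lam: "lam \<ge> 0"
  defines "w \<equiv> dless (Rcov h0 h1 s0 s1 c1 sn + lam *\<^sub>R outer h1 h1) h0"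
  shows "w \<bullet> h0 = 1" "\<exists>p q. w = p *\<^sub>R h0 + q *\<^sub>R h1"
    "(w \<bullet> h1) * (sn + (s1 + lam) * (1 - s^2)) = sn * s - c1 * (1 - s^2)"
proof -
  let ?M = "Rcov h0 h1 s0 s1 c1 sn + lam *\<^sub>R outer h1 h1"
  have inv: "invertible ?M" by (rule posdef_invertible, rule M_posdef[OF sn psd lam])
  define u where "u = matrix_inv ?M *v h0"
  have Mu: "?M *v u = h0" unfolding u_def by (rule inv_solve[OF inv])
  have h00: "h0 \<bullet> h0 = 1" using n0 by (metis power2_norm_eq_inner power_one)
  have h11: "h1 \<bullet> h1 = 1" using n1 by (metis power2_norm_eq_inner power_one)
  have h10: "h1 \<bullet> h0 = s" using hs by (simp add: inner_commute)
  have "u \<noteq> 0" using Mu h00 by auto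
  hence "0 < u \<bullet> (?M *v u)" by (rule M_posdef[OF sn psd lam])
  hence Xpos: "0 < h0 \<bullet> u" using Mu by (simp add: inner_commute)
  define X where "X = h0 \<bullet> u"
  define Y where "Y = h1 \<bullet> u"
  have e1: "h0 \<bullet> (?M *v u) = 1" using Mu h00 by simp
  have e2: "h1 \<bullet> (?M *v u) = s" using Mu h10 by simp
  have e1': "sn * X + (s0 * X + c1 * Y) + ((s1 + lam) * Y + c1 * X) * s = 1"
    using e1 unfolding Rcov_mult X_def Y_def by (simp add: inner_add_right h00 hs)
  have e2': "sn * Y + (s0 * X + c1 * Y) * s + ((s1 + lam) * Y + c1 * X) = s"
    using e2 unfolding Rcov_mult X_def Y_def by (simp add: inner_add_right h11 h10)
  have key: "Y * (sn + (s1 + lam) * (1 - s^2)) = X * (sn * s - c1 * (1 - s^2))"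
  proof -
    have "Y * (sn + (s1 + lam) * (1 - s^2)) - X * (sn * s - c1 * (1 - s^2))
       = (sn * Y + (s0 * X + c1 * Y) * s + ((s1 + lam) * Y + c1 * X)) - s * (sn * X + (s0 * X + c1 * Y) + ((s1 + lam) * Y + c1 * X) * s)"
      by (simp add: algebra_simps power2_eq_square)
    also have "\<dots> = 0" using e1' e2' by simp
    finally show ?thesis by simp
  qed
  have wdef: "w = (1 / X) *\<^sub>R u" unfolding w_def dless_def u_def X_def by simp
  show "w \<bullet> h0 = 1" using Xpos unfolding wdef X_def by (simp add: inner_commute)
  have "w \<bullet> h1 = Y / X" unfolding wdef Y_def by (simp add: inner_commute)
  hence "(w \<bullet> h1) * (sn + (s1 + lam) * (1 - s^2)) = (Y * (sn + (s1 + lam) * (1 - s^2))) / X" by simp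
  also have "\<dots> = X * (sn * s - c1 * (1 - s^2)) / X" using key by simp
  also have "\<dots> = sn * s - c1 * (1 - s^2)" using Xpos X_def by simp
  finally show "(w \<bullet> h1) * (sn + (s1 + lam) * (1 - s^2)) = sn * s - c1 * (1 - s^2)" .
  obtain p q where "u = p *\<^sub>R h0 + q *\<^sub>R h1"
    using M_inv_span[OF sn psd lam, of h0 h1 1 0] unfolding u_def by auto
  thus "\<exists>p q. w = p *\<^sub>R h0 + q *\<^sub>R h1" unfolding wdef
    by (metis scaleR_add_right scaleR_scaleR)
qed

lemma Jmse_dl:
  fixes h0 h1 w :: "real^'n"
  assumes n0: "norm h0 = 1" and n1: "norm h1 = 1" and hs: "h0 \<bullet> h1 = s" and s2: "s^2 < 1"
  assumes wh0: "w \<bullet> h0 = 1" and sp: "w = p *\<^sub>R h0 + q *\<^sub>R h1"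
  shows "Jmse h0 h1 s0 s1 c1 sn w = s1 * (w \<bullet> h1)^2 + sn * (1 - 2 * s * (w \<bullet> h1) + (w \<bullet> h1)^2) / (1 - s^2)"
proof -
  define a where "a = w \<bullet> h1"
  have h00: "h0 \<bullet> h0 = 1" using n0 by (metis power2_norm_eq_inner power_one)
  have h11: "h1 \<bullet> h1 = 1" using n1 by (metis power2_norm_eq_inner power_one)
  have ww: "w \<bullet> w = p + q * a" using wh0 unfolding a_def
    by (subst (2) sp) (simp add: inner_add_right)
  have h10: "h1 \<bullet> h0 = s" using hs by (simp add: inner_commute)
  have eq1: "p + q * s = 1" using wh0 unfolding sp by (simp add: inner_add_left h00 h10)
  have eq2: "p * s + q = a" unfolding a_def sp by (simp add: inner_add_left h11 hs)
  have k: "1 - s^2 > 0" using s2 by simp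
  have "a - s = p * s + q - (p + q * s) * s" using eq1 eq2 by simp
  also have "\<dots> = q * (1 - s^2)" by (simp add: algebra_simps power2_eq_square)
  finally have "q * (1 - s^2) = a - s" by simp
  hence qv: "q = (a - s) / (1 - s^2)" using k by (simp add: field_simps)
  have pv: "p = 1 - q * s" using eq1 by simp
  have "w \<bullet> w = 1 + q * (a - s)" unfolding ww pv by (simp add: algebra_simps)
  also have "\<dots> = 1 + (a - s)^2 / (1 - s^2)" by (simp add: qv power2_eq_square)
  also have "\<dots> = ((1 - s^2) + (a - s)^2) / (1 - s^2)" using k by (simp add: add_divide_distrib)
  also have "(1 - s^2) + (a - s)^2 = 1 - 2 * s * a + a^2" by (simp add: power2_eq_square algebra_simps)
  finally have ww2: "w \<bullet> w = (1 - 2 * s * a + a^2) / (1 - s^2)" .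
  have "Jmse h0 h1 s0 s1 c1 sn w = sn * (w \<bullet> w) + s1 * a^2"
    unfolding Jmse_def Rcov_mult0 using wh0
    by (simp add: inner_add_right inner_commute a_def power2_eq_square algebra_simps)
  thus ?thesis unfolding ww2 a_def by simp
qed

lemma Hmat_mult: "Hmat h0 h1 *v x = x$1 *\<^sub>R h0 + x$2 *\<^sub>R h1"
  by (simp add: Hmat_def matrix_vector_mult_def vec_eq_iff sum_2 mult.commute)

lemma HT_mult1: "(transpose (Hmat h0 h1) *v z) $ 1 = h0 \<bullet> z"
  by (simp add: Hmat_def matrix_vector_mult_def transpose_def inner_vec_def)

lemma HT_mult2: "(transpose (Hmat h0 h1) *v z) $ 2 = h1 \<bullet> z"
  by (simp add: Hmat_def matrix_vector_mult_def transpose_def inner_vec_def)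

lemma w_ZF_props:
  fixes h0 h1 :: "real^'n"
  assumes n0: "norm h0 = 1" and n1: "norm h1 = 1" and hs: "h0 \<bullet> h1 = s" and s2: "s^2 < 1"
  assumes sn: "sn > 0" and psd: "\<And>a b. 0 \<le> s0 * a^2 + s1 * b^2 + 2 * c1 * a * b"
  defines "w \<equiv> w_ZF h0 h1 s0 s1 c1 sn"
  shows "w \<bullet> h0 = 1" "w \<bullet> h1 = 0" "\<exists>p q. w = p *\<^sub>R h0 + q *\<^sub>R h1"
proof -
  let ?R = "Rcov h0 h1 s0 s1 c1 sn"
  let ?Ri = "matrix_inv ?R"
  let ?H = "Hmat h0 h1"
  let ?G = "transpose ?H ** ?Ri ** ?H"
  have Rpd: "0 < x \<bullet> (?R *v x)" if "x \<noteq> 0" for x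
    using M_posdef[OF sn psd order_refl that, of h0 h1] by simp
  have Rinv: "invertible ?R" by (rule posdef_invertible, rule Rpd)
  have Ripd: "0 < y \<bullet> (?Ri *v y)" if "y \<noteq> 0" for y
  proof -
    define z where "z = ?Ri *v y"
    have Rz: "?R *v z = y" unfolding z_def by (rule inv_solve[OF Rinv])
    hence "z \<noteq> 0" using that by auto
    hence "0 < z \<bullet> (?R *v z)" by (rule Rpd)
    thus ?thesis using Rz by (simp add: z_def inner_commute)
  qed
  have h00: "h0 \<bullet> h0 = 1" using n0 by (metis power2_norm_eq_inner power_one)
  have h11: "h1 \<bullet> h1 = 1" using n1 by (metis power2_norm_eq_inner power_one)
  have h10: "h1 \<bullet> h0 = s" using hs by (simp add: inner_commute)
  have Hnz: "?H *v x \<noteq> 0" if "x \<noteq> 0" for x :: "real^2"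
  proof
    assume "?H *v x = 0"
    hence "(?H *v x) \<bullet> (?H *v x) = 0" by simp
    hence "(x$1 + s * x$2)^2 + (1 - s^2) * (x$2)^2 = 0"
      unfolding Hmat_mult by (simp add: inner_add_left inner_add_right h00 h11 hs h10 power2_eq_square algebra_simps)
    moreover have "0 \<le> (x$1 + s * x$2)^2" by simp
    moreover have "0 \<le> (1 - s^2) * (x$2)^2" using s2 by simp
    ultimately have a: "(x$1 + s * x$2)^2 = 0" and b: "(1 - s^2) * (x$2)^2 = 0" by linarith+
    from b s2 have "x$2 = 0" by simp
    with a have "x$1 = 0" by simp
    with \<open>x$2 = 0\<close> have "x = 0" by (simp add: vec_eq_iff forall_2)
    with that show False by simp
  qed
  have Gpd: "0 < x \<bullet> (?G *v x)" if "x \<noteq> 0" for x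
  proof -
    have "x \<bullet> (?G *v x) = x \<bullet> (transpose ?H *v (?Ri *v (?H *v x)))"
      by (simp add: matrix_vector_mul_assoc matrix_mul_assoc)
    also have "\<dots> = (?H *v x) \<bullet> (?Ri *v (?H *v x))"
      by (metis dot_lmul_matrix vector_transpose_matrix)
    finally show ?thesis using Ripd[OF Hnz[OF that]] by simp
  qed
  have Ginv: "invertible ?G" by (rule posdef_invertible, rule Gpd)
  define v where "v = matrix_inv ?G *v e1"
  have Gv: "?G *v v = e1" unfolding v_def by (rule inv_solve[OF Ginv])
  have wv: "w = ?Ri *v (?H *v v)"
    unfolding w_def w_ZF_def v_def Let_def by (simp add: matrix_vector_mul_assoc matrix_mul_assoc)
  have "transpose ?H *v w = e1" unfolding wv using Gv by (simp add: matrix_vector_mul_assoc matrix_mul_assoc)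
  hence "(transpose ?H *v w) $ 1 = 1" "(transpose ?H *v w) $ 2 = 0" by (simp_all add: e1_def)
  thus "w \<bullet> h0 = 1" "w \<bullet> h1 = 0" unfolding HT_mult1 HT_mult2 by (simp_all add: inner_commute)
  show "\<exists>p q. w = p *\<^sub>R h0 + q *\<^sub>R h1"
    using M_inv_span[OF sn psd order_refl, of h0 h1 "v$1" "v$2"] unfolding wv Hmat_mult by simp
qed



lemma F_id:
  fixes s c S1 sn a :: real
  assumes sc: "s^2 + c^2 = 1" and c: "c > 0" and sn: "sn > 0" and S1: "S1 \<ge> 0"
  shows "S1 * a^2 + sn * (1 - 2 * s * a + a^2) / c^2
     = sn * (S1 + sn) / (S1 * c^2 + sn) + ((S1 * c^2 + sn) / c^2) * (a - sn * s / (S1 * c^2 + sn))^2"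
proof -
  have D: "S1 * c^2 + sn > 0" using sn S1 by (simp add: add_nonneg_pos)
  have c2: "c^2 > 0" using c by simp
  have D': "S1 * (c * c) + sn \<noteq> 0" "c \<noteq> 0" using D c by (auto simp: power2_eq_square)
  show ?thesis using D' sc
    apply (simp add: power2_eq_square divide_simps)
    apply algebra
    done
qed

lemma sq_le_sq_nonneg: "0 \<le> x \<Longrightarrow> x \<le> y \<Longrightarrow> x^2 \<le> (y::real)^2"
  by (simp add: power_mono)

lemma core:
  fixes s c t S1 sn c1 mv zf dr rzf :: real and F G :: "real \<Rightarrow> real"
  assumes sc: "s^2 + c^2 = 1" and c: "c > 0" and t: "t = s / c" and sn: "sn > 0" and S1: "S1 \<ge> 0"
    and Fdef: "\<And>a. F a = S1 * a^2 + sn * (1 - 2 * s * a + a^2) / c^2"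
    and G: "\<And>lam. lam \<ge> 0 \<Longrightarrow> G lam = F ((sn * s - c1 * c^2) / (S1 * c^2 + sn + lam * c^2))"
    and mv: "mv = F ((sn * s - c1 * c^2) / (S1 * c^2 + sn))"
    and zf: "zf = F 0" and dr: "dr = F (sn * s / (S1 * c^2 + sn))"
    and rzf: "rzf = (INF lam\<in>{0..}. G lam)"
  shows "mv = (sn * (S1 + sn) + \<bar>c1\<bar>\<^sup>2 * c\<^sup>2) / (S1 * c\<^sup>2 + sn)
     \<and> zf = sn * (t\<^sup>2 + 1)
     \<and> dr = sn * (S1 + sn) / (S1 * c\<^sup>2 + sn)
     \<and> dr = mv - \<bar>c1\<bar>\<^sup>2 * c\<^sup>2 / (S1 * c\<^sup>2 + sn)
     \<and> dr = zf - sn\<^sup>2 * t\<^sup>2 / (S1 * c\<^sup>2 + sn)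
     \<and> (sn * t - c1 * c = 0 \<longrightarrow> (\<forall>lam\<ge>0. G lam = zf \<and> G lam = mv))
     \<and> (sn * t - c1 * c \<noteq> 0 \<longrightarrow>
          ((sn * t / (sn * t - c1 * c) \<le> 0 \<longrightarrow> rzf = zf)
           \<and> (0 < sn * t / (sn * t - c1 * c) \<and> sn * t / (sn * t - c1 * c) < 1 \<longrightarrow> rzf = dr)
           \<and> (sn * t / (sn * t - c1 * c) \<ge> 1 \<longrightarrow> rzf = mv)))"
proof -
  define D where "D = S1 * c^2 + sn"
  define K where "K = sn * s - c1 * c^2"
  define A where "A = D / c^2"
  define dr0 where "dr0 = sn * (S1 + sn) / D"
  define as where "as = sn * s / D"
  have c2: "c^2 > 0" using c by simp
  have Dp: "D > 0" unfolding D_def using sn S1 by (simp add: add_nonneg_pos)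
  have Ap: "A > 0" unfolding A_def using Dp c2 by simp
  have Fid: "F a = dr0 + A * (a - as)^2" for a
    unfolding Fdef dr0_def A_def as_def D_def by (rule F_id[OF sc c sn S1])
  have Gl: "G lam = F (K / (D + lam * c^2))" if "lam \<ge> 0" for lam
    using G[OF that] unfolding K_def D_def by simp
  have mvF: "mv = F (K / D)" using mv unfolding K_def D_def by simp
  have drF: "dr = dr0" using dr unfolding Fid as_def D_def by simp
  have zfv: "zf = sn / c^2" using zf Fdef by simp
  have mvv: "mv = dr0 + c1^2 * c^2 / D"
  proof -
    have "K / D - as = - (c1 * c^2 / D)" unfolding K_def as_def by (simp add: diff_divide_distrib)
    hence "mv = dr0 + A * (c1 * c^2 / D)^2" unfolding mvF Fid by simp
    also have "A * (c1 * c^2 / D)^2 = c1^2 * c^2 / D" unfolding A_def using Dp c2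
      by (simp add: power2_eq_square field_simps)
    finally show ?thesis .
  qed
  have zfas: "zf = dr0 + A * as^2" using zf unfolding Fid by simp
  have t2: "t^2 + 1 = 1 / c^2" unfolding t using sc c2 by (simp add: field_simps power_divide)
  have g1: "mv = (sn * (S1 + sn) + \<bar>c1\<bar>\<^sup>2 * c\<^sup>2) / (S1 * c\<^sup>2 + sn)"
    unfolding mvv dr0_def D_def by (simp add: add_divide_distrib)
  have g2: "zf = sn * (t\<^sup>2 + 1)" unfolding zfv t2 by simp
  have g3: "dr = sn * (S1 + sn) / (S1 * c\<^sup>2 + sn)" unfolding drF dr0_def D_def ..
  have g4: "dr = mv - \<bar>c1\<bar>\<^sup>2 * c\<^sup>2 / (S1 * c\<^sup>2 + sn)" unfolding drF mvv D_def by simp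
  have g5: "dr = zf - sn\<^sup>2 * t\<^sup>2 / (S1 * c\<^sup>2 + sn)"
  proof -
    have "zf - dr = A * as^2" using zfas drF by simp
    also have "\<dots> = sn\<^sup>2 * t\<^sup>2 / D" unfolding A_def as_def t using Dp c2
      by (simp add: power2_eq_square field_simps)
    finally show ?thesis unfolding D_def by simp
  qed
  have dK: "sn * t - c1 * c = K / c" unfolding t K_def using c by (simp add: field_simps power2_eq_square)
  have g6: "sn * t - c1 * c = 0 \<longrightarrow> (\<forall>lam\<ge>0. G lam = zf \<and> G lam = mv)"
  proof (intro impI allI)
    fix lam :: real assume "sn * t - c1 * c = 0" "lam \<ge> 0"
    hence K0: "K = 0" using dK c by simp
    show "G lam = zf \<and> G lam = mv" using Gl[OF \<open>lam \<ge> 0\<close>] zf mvF K0 by simp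
  qed
  have g7: "sn * t - c1 * c \<noteq> 0 \<longrightarrow>
          ((sn * t / (sn * t - c1 * c) \<le> 0 \<longrightarrow> rzf = zf)
           \<and> (0 < sn * t / (sn * t - c1 * c) \<and> sn * t / (sn * t - c1 * c) < 1 \<longrightarrow> rzf = dr)
           \<and> (sn * t / (sn * t - c1 * c) \<ge> 1 \<longrightarrow> rzf = mv))"
  proof (intro impI)
    assume "sn * t - c1 * c \<noteq> 0"
    hence K0: "K \<noteq> 0" using dK by auto
    define \<gamma> where "\<gamma> = sn * s / K"
    have g\<gamma>: "sn * t / (sn * t - c1 * c) = \<gamma>"
    proof -
      have "sn * t / (sn * t - c1 * c) = (sn * s / c) / (K / c)" by (subst dK) (simp add: t)
      also have "\<dots> = \<gamma>" unfolding \<gamma>_def using c by simp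
      finally show ?thesis .
    qed
    have asg: "as = \<gamma> * (K / D)" unfolding as_def \<gamma>_def using K0 by simp
    define \<rho> where "\<rho> lam = D / (D + lam * c^2)" for lam
    have \<rho>p: "0 < \<rho> lam" "\<rho> lam \<le> 1" if "lam \<ge> 0" for lam
    proof -
      have "D + lam * c^2 \<ge> D" using that c2 by simp
      thus "0 < \<rho> lam" "\<rho> lam \<le> 1" unfolding \<rho>_def using Dp by auto
    qed
    have G\<rho>: "G lam = dr0 + A * (K / D)^2 * (\<rho> lam - \<gamma>)^2" if "lam \<ge> 0" for lam
    proof -
      have pos: "D + lam * c^2 > 0" using that c2 Dp by (simp add: add_pos_nonneg)
      have "K / (D + lam * c^2) - as = (K / D) * (\<rho> lam - \<gamma>)"
        unfolding asg \<rho>_def using pos Dp by (simp add: field_simps)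
      thus ?thesis unfolding Gl[OF that] Fid by (simp add: power_mult_distrib power_divide)
    qed
    define E where "E = A * (K / D)^2"
    have Ep: "E \<ge> 0" unfolding E_def using Ap by simp
    have zfE: "zf = dr0 + E * \<gamma>^2" unfolding zfas asg E_def by (simp add: power_mult_distrib power_divide)
    have mvE: "mv = dr0 + E * (1 - \<gamma>)^2" unfolding mvF Fid asg E_def
    proof -
      have "K / D - \<gamma> * (K / D) = (K / D) * (1 - \<gamma>)" by (simp add: right_diff_distrib mult.commute diff_divide_distrib)
      thus "dr0 + A * (K / D - \<gamma> * (K / D))^2 = dr0 + A * (K / D)^2 * (1 - \<gamma>)^2"
        by (simp only: power_mult_distrib mult.assoc)
    qed
    have GE: "G lam = dr0 + E * (\<rho> lam - \<gamma>)^2" if "lam \<ge> 0" for lam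
      using G\<rho>[OF that] unfolding E_def .
    have bdd: "bdd_below (G ` {0..})"
      by (rule bdd_belowI[of _ dr0]) (auto simp: GE Ep)
    have r1: "\<gamma> \<le> 0 \<longrightarrow> rzf = zf"
    proof
      assume h: "\<gamma> \<le> 0"
      have lb: "zf \<le> G lam" if "lam \<ge> 0" for lam
      proof -
        have "(- \<gamma>)^2 \<le> (\<rho> lam - \<gamma>)^2" using h \<rho>p[OF that] by (intro sq_le_sq_nonneg) auto
        thus ?thesis unfolding GE[OF that] zfE using Ep by (simp add: mult_left_mono)
      qed
      have "filterlim (\<lambda>lam. D + lam * c^2) at_top at_top"
        by (rule filterlim_tendsto_add_at_top[OF tendsto_const])
           (rule filterlim_at_top_mult_tendsto_pos[OF tendsto_const c2 filterlim_ident])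
      hence "((\<lambda>lam. D / (D + lam * c^2)) \<longlongrightarrow> 0) at_top"
        by (intro tendsto_divide_0[OF tendsto_const] filterlim_at_top_imp_at_infinity)
      hence "((\<lambda>lam. \<rho> lam) \<longlongrightarrow> 0) at_top" unfolding \<rho>_def .
      hence lim0: "((\<lambda>lam. dr0 + E * (\<rho> lam - \<gamma>)^2) \<longlongrightarrow> dr0 + E * (0 - \<gamma>)^2) at_top"
        by (intro tendsto_intros)
      have ev: "eventually (\<lambda>lam. dr0 + E * (\<rho> lam - \<gamma>)^2 = G lam) at_top"
        using eventually_ge_at_top[of 0] by eventually_elim (simp add: GE)
      have limG: "(G \<longlongrightarrow> zf) at_top"
        using Lim_transform_eventually[OF lim0 ev] zfE by simp
      have ev2: "eventually (\<lambda>lam. rzf \<le> G lam) at_top"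
        using eventually_ge_at_top[of 0] by eventually_elim (auto simp: rzf intro: cINF_lower[OF bdd])
      have "rzf \<le> zf" by (rule tendsto_le[OF trivial_limit_at_top_linorder limG tendsto_const ev2])
      moreover have "zf \<le> rzf" unfolding rzf by (rule cINF_greatest) (auto simp: lb)
      ultimately show "rzf = zf" by simp
    qed
    have r2: "0 < \<gamma> \<and> \<gamma> < 1 \<longrightarrow> rzf = dr"
    proof
      assume h: "0 < \<gamma> \<and> \<gamma> < 1"
      define l0 where "l0 = (D / \<gamma> - D) / c^2"
      have "D / \<gamma> > D" using h Dp by (simp add: field_simps)
      hence l0p: "l0 \<ge> 0" unfolding l0_def using c2 by simp
      have "D + l0 * c^2 = D / \<gamma>" unfolding l0_def using c2 by simp
      hence "\<rho> l0 = \<gamma>" unfolding \<rho>_def using h Dp by simp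
      hence Gl0: "G l0 = dr0" using GE[OF l0p] by simp
      have "rzf \<le> dr0" unfolding rzf using cINF_lower[OF bdd, of l0] l0p Gl0 by simp
      moreover have "dr0 \<le> rzf" unfolding rzf by (rule cINF_greatest) (auto simp: GE Ep)
      ultimately show "rzf = dr" using drF by simp
    qed
    have r3: "\<gamma> \<ge> 1 \<longrightarrow> rzf = mv"
    proof
      assume h: "\<gamma> \<ge> 1"
      have "\<rho> 0 = 1" unfolding \<rho>_def using Dp by simp
      hence G0: "G 0 = mv" using GE[of 0] mvE by simp
      have lb: "mv \<le> G lam" if "lam \<ge> 0" for lam
      proof -
        have "(\<gamma> - 1)^2 \<le> (\<gamma> - \<rho> lam)^2" using h \<rho>p[OF that] by (intro sq_le_sq_nonneg) auto
        hence "(1 - \<gamma>)^2 \<le> (\<rho> lam - \<gamma>)^2" by (simp add: power2_commute)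
        thus ?thesis unfolding GE[OF that] mvE using Ep by (simp add: mult_left_mono)
      qed
      have "rzf \<le> mv" unfolding rzf using cINF_lower[OF bdd, of 0] G0 by simp
      moreover have "mv \<le> rzf" unfolding rzf by (rule cINF_greatest) (auto simp: lb)
      ultimately show "rzf = mv" by simp
    qed
    show "(sn * t / (sn * t - c1 * c) \<le> 0 \<longrightarrow> rzf = zf)
           \<and> (0 < sn * t / (sn * t - c1 * c) \<and> sn * t / (sn * t - c1 * c) < 1 \<longrightarrow> rzf = dr)
           \<and> (sn * t / (sn * t - c1 * c) \<ge> 1 \<longrightarrow> rzf = mv)" unfolding g\<gamma> using r1 r2 r3 by blast
  qed
  show ?thesis using g1 g2 g3 g4 g5 g6 g7 by blast
qed

theorem theorem2:
  fixes h0 h1 :: "real ^ 'n" and \<tau> \<sigma>0 \<sigma>1 \<sigma>n c1 :: real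
  assumes "CARD('n) \<ge> 2"
    and "norm h0 = 1" and "norm h1 = 1" and "h0 \<bullet> h1 = sin \<tau>"
    and "- (pi / 2) < \<tau>" and "\<tau> < pi / 2"
    and "\<sigma>0 > 0" and "\<sigma>1 > 0" and "\<sigma>n > 0"
    and "- (\<sigma>0 * \<sigma>1) \<le> c1" and "c1 \<le> \<sigma>0 * \<sigma>1"
  shows
   "let s0 = \<sigma>0\<^sup>2; s1 = \<sigma>1\<^sup>2; sn = \<sigma>n\<^sup>2;
        \<delta> = sn * tan \<tau> - c1 * cos \<tau>;
        D = s1 * (cos \<tau>)\<^sup>2 + sn;
        mvdr = MSE_MVDR h0 h1 s0 s1 c1 sn;
        zf = MSE_ZF h0 h1 s0 s1 c1 sn;
        dr = MSE_MMSE_DR h0 h1 s0 s1 c1 sn;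
        rzf = MSE_RZF h0 h1 s0 s1 c1 sn
    in mvdr = (sn * (s1 + sn) + \<bar>c1\<bar>\<^sup>2 * (cos \<tau>)\<^sup>2) / D
     \<and> zf = sn * ((tan \<tau>)\<^sup>2 + 1)
     \<and> dr = sn * (s1 + sn) / D
     \<and> dr = mvdr - \<bar>c1\<bar>\<^sup>2 * (cos \<tau>)\<^sup>2 / D
     \<and> dr = zf - sn\<^sup>2 * (tan \<tau>)\<^sup>2 / D
     \<and> (\<delta> = 0 \<longrightarrow> (\<forall>lam\<ge>0. MSE h0 h1 s0 s1 c1 sn lam = zf \<and> MSE h0 h1 s0 s1 c1 sn lam = mvdr))
     \<and> (\<delta> \<noteq> 0 \<longrightarrow>
          (let \<gamma> = sn * tan \<tau> / \<delta> in
             (\<gamma> \<le> 0 \<longrightarrow> rzf = zf)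
           \<and> (0 < \<gamma> \<and> \<gamma> < 1 \<longrightarrow> rzf = dr)
           \<and> (\<gamma> \<ge> 1 \<longrightarrow> rzf = mvdr)))"
  proof -
  note A = assms
  have c: "cos \<tau> > 0" using cos_gt_zero_pi A(5,6) by blast
  have sc: "(sin \<tau>)^2 + (cos \<tau>)^2 = 1" by simp
  have k: "1 - (sin \<tau>)^2 = (cos \<tau>)^2" by (simp add: cos_squared_eq)
  have s2: "(sin \<tau>)^2 < 1"
  proof -
    have "0 < (cos \<tau>)^2" using c by simp
    thus ?thesis using k by linarith
  qed
  have snp: "\<sigma>n^2 > 0" using A(9) by simp
  have S1: "\<sigma>1^2 \<ge> 0" by simp
  have psd: "0 \<le> \<sigma>0^2 * a^2 + \<sigma>1^2 * b^2 + 2 * c1 * a * b" for a b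
  proof -
    have "0 \<le> (\<sigma>0 * \<bar>a\<bar> - \<sigma>1 * \<bar>b\<bar>)^2" by simp
    hence "2 * (\<sigma>0 * \<sigma>1) * (\<bar>a\<bar> * \<bar>b\<bar>) \<le> \<sigma>0^2 * a^2 + \<sigma>1^2 * b^2"
      by (simp add: power2_eq_square algebra_simps)
    moreover have "\<bar>c1\<bar> * (\<bar>a\<bar> * \<bar>b\<bar>) \<le> (\<sigma>0 * \<sigma>1) * (\<bar>a\<bar> * \<bar>b\<bar>)"
      using A(10,11) by (intro mult_right_mono) auto
    moreover have "- (c1 * a * b) \<le> \<bar>c1\<bar> * (\<bar>a\<bar> * \<bar>b\<bar>)"
      by (metis abs_ge_minus_self abs_mult mult.assoc)
    ultimately show ?thesis by linarith
  qed
  have psd0: "0 \<le> 0 * a^2 + \<sigma>1^2 * b^2 + 2 * 0 * a * b" for a b :: real by simp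
  define F where "F a = \<sigma>1^2 * a^2 + \<sigma>n^2 * (1 - 2 * sin \<tau> * a + a^2) / (cos \<tau>)^2" for a
  have JF: "Jmse h0 h1 (\<sigma>0^2) (\<sigma>1^2) c1 (\<sigma>n^2) w = F (w \<bullet> h1)"
    if "w \<bullet> h0 = 1" "\<exists>p q. w = p *\<^sub>R h0 + q *\<^sub>R h1" for w
    using that Jmse_dl[OF A(2,3,4) s2, of w] unfolding F_def k by blast
  have G: "MSE h0 h1 (\<sigma>0^2) (\<sigma>1^2) c1 (\<sigma>n^2) lam
      = F ((\<sigma>n^2 * sin \<tau> - c1 * (cos \<tau>)^2) / (\<sigma>1^2 * (cos \<tau>)^2 + \<sigma>n^2 + lam * (cos \<tau>)^2))"
    if lam: "lam \<ge> 0" for lam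
  proof -
    define w where "w = w_RZF h0 h1 (\<sigma>0^2) (\<sigma>1^2) c1 (\<sigma>n^2) lam"
    note P = dless_props[OF A(2,3,4) snp psd lam, folded w_RZF_def w_def]
    have "(w \<bullet> h1) * (\<sigma>1^2 * (cos \<tau>)^2 + \<sigma>n^2 + lam * (cos \<tau>)^2) = \<sigma>n^2 * sin \<tau> - c1 * (cos \<tau>)^2"
      using P(3) unfolding k by (simp add: algebra_simps)
    moreover have "\<sigma>1^2 * (cos \<tau>)^2 + \<sigma>n^2 + lam * (cos \<tau>)^2 > 0"
      using snp lam c by (simp add: add_nonneg_pos add_pos_nonneg)
    ultimately have "w \<bullet> h1 = (\<sigma>n^2 * sin \<tau> - c1 * (cos \<tau>)^2) / (\<sigma>1^2 * (cos \<tau>)^2 + \<sigma>n^2 + lam * (cos \<tau>)^2)"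
      by (simp add: field_simps)
    thus ?thesis unfolding MSE_def w_def[symmetric] using JF[OF P(1,2)] by simp
  qed
  have mv: "MSE_MVDR h0 h1 (\<sigma>0^2) (\<sigma>1^2) c1 (\<sigma>n^2) = F ((\<sigma>n^2 * sin \<tau> - c1 * (cos \<tau>)^2) / (\<sigma>1^2 * (cos \<tau>)^2 + \<sigma>n^2))"
    using G[of 0] unfolding MSE_MVDR_def w_MVDR_def MSE_def by simp
  have zf: "MSE_ZF h0 h1 (\<sigma>0^2) (\<sigma>1^2) c1 (\<sigma>n^2) = F 0"
    using w_ZF_props[OF A(2,3,4) s2 snp psd] JF unfolding MSE_ZF_def by simp
  have dr: "MSE_MMSE_DR h0 h1 (\<sigma>0^2) (\<sigma>1^2) c1 (\<sigma>n^2) = F (\<sigma>n^2 * sin \<tau> / (\<sigma>1^2 * (cos \<tau>)^2 + \<sigma>n^2))"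
  proof -
    have weq: "w_MMSE_DR h0 h1 (\<sigma>1^2) (\<sigma>n^2) = dless (Rcov h0 h1 0 (\<sigma>1^2) 0 (\<sigma>n^2) + 0 *\<^sub>R outer h1 h1) h0"
      unfolding w_MMSE_DR_def Rcov_def by (simp add: add.commute)
    define w where "w = w_MMSE_DR h0 h1 (\<sigma>1^2) (\<sigma>n^2)"
    note P = dless_props[OF A(2,3,4) snp psd0 order_refl, folded weq w_def]
    have "(w \<bullet> h1) * (\<sigma>1^2 * (cos \<tau>)^2 + \<sigma>n^2) = \<sigma>n^2 * sin \<tau>"
      using P(3) unfolding k by (simp add: algebra_simps)
    moreover have "\<sigma>1^2 * (cos \<tau>)^2 + \<sigma>n^2 > 0"
      using snp c by (simp add: add_nonneg_pos)
    ultimately have "w \<bullet> h1 = \<sigma>n^2 * sin \<tau> / (\<sigma>1^2 * (cos \<tau>)^2 + \<sigma>n^2)"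
      by (simp add: field_simps)
    thus ?thesis unfolding MSE_MMSE_DR_def w_def[symmetric] using JF[OF P(1,2)] by simp
  qed
  have tt: "tan \<tau> = sin \<tau> / cos \<tau>" by (simp add: tan_def)
  show ?thesis unfolding Let_def
    apply (rule core[where G = "MSE h0 h1 (\<sigma>0^2) (\<sigma>1^2) c1 (\<sigma>n^2)" and F = F and s = "sin \<tau>" and c = "cos \<tau>"])
    apply (rule sc)
    apply (rule c)
    apply (rule tt)
    apply (rule snp)
    apply (rule S1)
    apply (rule F_def)
    apply (erule G)
    apply (rule mv)
    apply (rule zf)
    apply (rule dr)
    apply (simp add: MSE_RZF_def)
    done
qed

end
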